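(* For integers $n\ge 1$ and $1\le k\le n$, define $T(n,k)=E(n,n-k)$. Then the numbers $T(n,k)$ satisfy $$T(n,k)=(n-k+1)\,T(n-1,k-1)+(n-1+k)\,T(n-1,k)\qquad (n\ge 2,\ 1\le k\le n),$$ with $T(n,1)=n!$ (and $T(m,j)=0$ for $j<1$ or $j>m$), and $T(n,k)$ equals the number of linear chord diagrams with $n$ chords having exactly $k$ LR pairs.
   Context: A linear chord diagram with $n$ chords is a partition of $[2n]=\{1,2,\dots,2n\}$ into $n$ blocks of size two, called chords. For a chord $\{a,b\}$ with $a<b$, $a$ is its startpoint and $b$ its endpoint. An LR pair in a linear chord diagram is a pair of consecutive integers $(i,i+1)$ such that $i$ is the startpoint of some chord and $i+1$ is the endpoint of some (possibly different) chord. The second-order Eulerian number $E(n,k)$ ($n\ge1$, $0\le k\le n-1$) is the number of permutations (words) $w_1w_2\cdots w_{2n}$ of the multiset $\{1,1,2,2,\dots,n,n\}$ such that for each $m$, all letters between the two copies of $m$ are less than $m$, and having exactly $k$ ascents, where an ascent is an index $1\le i<2n$ with $w_i<w_{i+1}$. These satisfy $E(n,0)=1$ and $E(n,k)=(k+1)E(n-1,k)+(2n-k-1)E(n-1,k-1)$. *)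

theory Defs
  imports Main "HOL-Library.Disjoint_Sets"
begin

definition stirling_perm :: "nat \<Rightarrow> nat list \<Rightarrow> bool" where
  "stirling_perm n w \<longleftrightarrow>
     length w = 2 * n \<and> set w \<subseteq> {1..n} \<and>
     (\<forall>m\<in>{1..n}. count_list w m = 2) \<and>
     (\<forall>i j l. i < l \<and> l < j \<and> j < length w \<and> w ! i = w ! j \<longrightarrow> w ! l < w ! i)"

definition ascents :: "nat list \<Rightarrow> nat" where
  "ascents w = card {i. Suc i < length w \<and> w ! i < w ! Suc i}"

definition eulerian2 :: "nat \<Rightarrow> nat \<Rightarrow> nat" where
  "eulerian2 n k = card {w. stirling_perm n w \<and> ascents w = k}"

definition T :: "nat \<Rightarrow> nat \<Rightarrow> nat" where
  "T n k = (if 1 \<le> k \<and> k \<le> n then eulerian2 n (n - k) else 0)"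

definition chord_diagram :: "nat \<Rightarrow> nat set set \<Rightarrow> bool" where
  "chord_diagram n C \<longleftrightarrow> partition_on {1..2*n} C \<and> (\<forall>c\<in>C. card c = 2)"

definition is_startpoint :: "nat set set \<Rightarrow> nat \<Rightarrow> bool" where
  "is_startpoint C i \<longleftrightarrow> (\<exists>c\<in>C. i \<in> c \<and> i = Min c)"

definition is_endpoint :: "nat set set \<Rightarrow> nat \<Rightarrow> bool" where
  "is_endpoint C i \<longleftrightarrow> (\<exists>c\<in>C. i \<in> c \<and> i = Max c)"

definition LR_pairs :: "nat set set \<Rightarrow> nat" where
  "LR_pairs C = card {i. is_startpoint C i \<and> is_endpoint C (i + 1)}"

end

theory Submission
  imports Defs
begin

fun asc :: "nat list \<Rightarrow> nat" where
  "asc (x#y#ys) = (if x < y then 1 else 0) + asc (y#ys)"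
| "asc _ = 0"

lemma ascents_asc: "ascents w = asc w"
proof (induction w rule: asc.induct)
  case (1 x y ys)
  have "{i. Suc i < length (x#y#ys) \<and> (x#y#ys) ! i < (x#y#ys) ! Suc i}
      = (if x < y then {0} else {}) \<union> Suc ` {i. Suc i < length (y#ys) \<and> (y#ys) ! i < (y#ys) ! Suc i}"
    by (rule set_eqI, case_tac xa) (auto simp: inj_image_mem_iff)
  hence "ascents (x#y#ys) = (if x < y then 1 else 0) + ascents (y#ys)"
    unfolding ascents_def by (simp add: card_image)
  with 1 show ?case by simp
next
  case "2_1" thus ?case by (simp add: ascents_def)
next
  case ("2_2" v) thus ?case by (simp add: ascents_def)
qed

lemma asc_append: "asc (xs @ ys) = asc xs + asc ys + (if xs \<noteq> [] \<and> ys \<noteq> [] \<and> last xs < hd ys then 1 else 0)"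
proof (induction xs rule: asc.induct)
  case (1 x y zs) thus ?case by simp
next
  case "2_1" thus ?case by simp
next
  case ("2_2" v) thus ?case by (cases ys) auto
qed

lemma asc_map_Suc: "asc (map Suc v) = asc v"
  by (induction v rule: asc.induct) auto

definition ins :: "nat \<Rightarrow> nat list \<Rightarrow> nat list" where
  "ins p v = take p (map Suc v) @ 1 # 1 # drop p (map Suc v)"

lemma length_ins[simp]: "length (ins p v) = length v + 2"
  by (simp add: ins_def)

lemma nth_ins: "p \<le> length v \<Longrightarrow> i < length v + 2 \<Longrightarrow>
  ins p v ! i = (if i < p then Suc (v ! i) else if i = p \<or> i = Suc p then 1 else Suc (v ! (i - 2)))"
proof -
  assume p: "p \<le> length v" and i: "i < length v + 2"
  show ?thesis
  proof (cases "i < p")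
    case True thus ?thesis using p by (simp add: ins_def nth_append)
  next
    case False
    hence "ins p v ! i = (1 # 1 # drop p (map Suc v)) ! (i - p)" using p by (simp add: ins_def nth_append)
    moreover have "i = p \<or> i = Suc p \<or> i - p = Suc (Suc (i - 2 - p))" using False by arith
    moreover have "i \<ge> p + 2 \<Longrightarrow> p + (i - 2 - p) = i - 2" by arith
    ultimately show ?thesis using False p i by auto
  qed
qed

lemma count_map_Suc: "count_list (map Suc v) (Suc j) = count_list v j"
  by (induction v) auto


lemma stirling_ins:
  assumes st: "stirling_perm n v" and p: "p \<le> length v"
  shows "stirling_perm (Suc n) (ins p v)"
proof -
  have len: "length v = 2*n" and set: "set v \<subseteq> {1..n}" and cnt: "\<forall>m\<in>{1..n}. count_list v m = 2"
    and btw: "\<And>i j l. i < l \<Longrightarrow> l < j \<Longrightarrow> j < length v \<Longrightarrow> v ! i = v ! j \<Longrightarrow> v ! l < v ! i"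
    using st unfolding stirling_perm_def by auto
  have setins: "set (ins p v) = insert 1 (Suc ` set v)"
  proof -
    have "set (ins p v) = insert 1 (set (take p (map Suc v)) \<union> set (drop p (map Suc v)))"
      by (auto simp: ins_def)
    also have "set (take p (map Suc v)) \<union> set (drop p (map Suc v)) = set (map Suc v)"
      by (metis append_take_drop_id set_append)
    finally show ?thesis by simp
  qed
  have cntins: "count_list (ins p v) m = count_list (map Suc v) m + (if m = 1 then 2 else 0)" for m
  proof -
    have "count_list (ins p v) m = count_list (take p (map Suc v)) m + count_list (drop p (map Suc v)) m + (if m = 1 then 2 else 0)"
      by (simp add: ins_def)
    also have "count_list (take p (map Suc v)) m + count_list (drop p (map Suc v)) m = count_list (map Suc v) m"
      by (metis append_take_drop_id count_list_append)
    finally show ?thesis .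
  qed
  show ?thesis unfolding stirling_perm_def
  proof (intro conjI ballI allI impI)
    show "length (ins p v) = 2 * Suc n" using len by simp
    show "set (ins p v) \<subseteq> {1..Suc n}" using set setins by auto
  next
    fix m assume m: "m \<in> {1..Suc n}"
    show "count_list (ins p v) m = 2"
    proof (cases "m = 1")
      case True
      have "0 \<notin> set v" using set by auto
      hence "count_list (map Suc v) 1 = 0" using count_map_Suc[of v 0] by simp
      with True show ?thesis using cntins by simp
    next
      case False
      then obtain j where j: "m = Suc j" "j \<in> {1..n}" using m by (cases m) auto
      thus ?thesis using cntins count_map_Suc cnt False by simp
    qed
  next
    fix i j l assume h: "i < l \<and> l < j \<and> j < length (ins p v) \<and> ins p v ! i = ins p v ! j"
    have vpos: "k < length v \<Longrightarrow> 1 \<le> v ! k" for k using set nth_mem by fastforce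
    note ni = nth_ins[OF p]
    show "ins p v ! l < ins p v ! i"
    proof (cases "i < p")
      case ip: True
      show ?thesis
      proof (cases "j < p")
        case True thus ?thesis using h ip p btw[of i l j] ni by auto
      next
        case jp: False
        show ?thesis
        proof (cases "j = p \<or> j = Suc p")
          case True thus ?thesis using h ip p vpos[of i] ni[of i] ni[of j] by auto
        next
          case False
          hence ev: "v ! i = v ! (j - 2)" using h ip jp ni[of i] ni[of j] by auto
          show ?thesis
          proof (cases "l < p")
            case True thus ?thesis using h ip jp False ev btw[of i l "j-2"] ni[of i] ni[of l] by auto
          next
            case lp: False
            show ?thesis
            proof (cases "l = p \<or> l = Suc p")
              case True thus ?thesis using h ip vpos[of i] ni[of i] ni[of l] p by auto
            next
              case False
              thus ?thesis using h ip jp lp \<open>\<not>(j = p \<or> j = Suc p)\<close> ev btw[of i "l-2" "j-2"] ni[of i] ni[of l] by auto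
            qed
          qed
        qed
      qed
    next
      case ip: False
      show ?thesis
      proof (cases "i = p \<or> i = Suc p")
        case True
        have "j \<noteq> p \<and> j \<noteq> Suc p \<Longrightarrow> False"
          using h True ni[of i] ni[of j] ip vpos[of "j-2"] p by (auto; linarith)
        thus ?thesis using h True by auto
      next
        case False
        have jn: "\<not> (j = p \<or> j = Suc p)" "\<not> (l = p \<or> l = Suc p)" using h ip False by auto
        hence ev: "v ! (i-2) = v ! (j - 2)" using h ip False ni[of i] ni[of j] by auto
        show ?thesis using h ip False jn ev btw[of "i-2" "l-2" "j-2"] ni[of i] ni[of l] ni[of j] by auto
      qed
    qed
  qed
qed



lemma stirling_dec:
  assumes st: "stirling_perm (Suc n) w"
  shows "\<exists>p v. stirling_perm n v \<and> p \<le> length v \<and> w = ins p v"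
proof -
  have len: "length w = 2*Suc n" and set: "set w \<subseteq> {1..Suc n}" and cnt: "\<forall>m\<in>{1..Suc n}. count_list w m = 2"
    and btw: "\<And>i j l. i < l \<Longrightarrow> l < j \<Longrightarrow> j < length w \<Longrightarrow> w ! i = w ! j \<Longrightarrow> w ! l < w ! i"
    using st unfolding stirling_perm_def by auto
  have c1: "count_list w 1 = 2" using cnt by auto
  hence "1 \<in> set w" by (metis count_notin zero_neq_numeral)
  then obtain A R where w1: "w = A @ 1 # R" and A1: "1 \<notin> set A" by (meson split_list_first)
  have cR: "count_list R 1 = 1" using c1 w1 A1 by simp
  then obtain r B where R: "R = r # B" by (cases R) auto
  have r1: "r = 1"
  proof (rule ccontr)
    assume "r \<noteq> 1"
    hence "count_list B 1 = 1" using cR R by simp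
    hence "1 \<in> set B" by (metis count_notin zero_neq_one)
    then obtain k where k: "k < length B" "B ! k = 1" by (meson in_set_conv_nth)
    let ?i = "length A" and ?l = "Suc (length A)" and ?j = "Suc (Suc (length A + k))"
    have "w ! ?i = 1" "w ! ?l = r" "w ! ?j = 1" using w1 R k by (auto simp: nth_append)
    moreover have "?j < length w" using w1 R k by simp
    ultimately have "r < 1" using btw[of ?i ?l ?j] by auto
    moreover have "r \<in> set w" using w1 R by auto
    ultimately show False using set by auto
  qed
  have "count_list B 1 = 0" using cR R r1 by simp
  hence B1: "1 \<notin> set B" by (simp add: count_list_0_iff)
  have ge2: "2 \<le> x" if x: "x \<in> set (A @ B)" for x
  proof -
    have "x \<in> set w" "x \<noteq> 1" using x w1 R A1 B1 by auto
    thus ?thesis using set by force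
  qed
  define v where "v = map (\<lambda>x. x - 1) (A @ B)"
  have mv: "map Suc v = A @ B" unfolding v_def map_map
    by (rule map_idI) (use ge2 in fastforce)
  have wi: "w = ins (length A) v" unfolding ins_def mv using w1 R r1 by simp
  have lv: "length v = 2 * n" using len w1 R unfolding v_def by simp
  have "stirling_perm n v" unfolding stirling_perm_def
  proof (intro conjI ballI allI impI)
    show "length v = 2 * n" by fact
    show "set v \<subseteq> {1..n}" unfolding v_def using ge2 set w1 R by fastforce
  next
    fix m assume m: "m \<in> {1..n}"
    have "count_list v m = count_list (map Suc v) (Suc m)" by (simp add: count_map_Suc)
    also have "\<dots> = count_list w (Suc m)" using mv w1 R r1 m by simp
    also have "\<dots> = 2" using cnt m by auto
    finally show "count_list v m = 2" .
  next
    fix i j l assume h: "i < l \<and> l < j \<and> j < length v \<and> v ! i = v ! j"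
    define hh where "hh x = (if x < length A then x else x + 2)" for x
    have pl: "length A \<le> length v" using mv by (metis length_append length_map le_add1)
    have whh: "x < length v \<Longrightarrow> w ! hh x = Suc (v ! x)" for x
      unfolding wi hh_def using nth_ins[OF pl] by auto
    have o: "hh i < hh l" "hh l < hh j" "hh j < length w" using h lv len by (auto simp: hh_def)
    have eq: "w ! hh i = w ! hh j" using whh h by simp
    have "w ! hh l < w ! hh i" by (rule btw[OF o eq])
    thus "v ! l < v ! i" using whh h by simp
  qed
  moreover have "length A \<le> length v" using mv by (metis length_append length_map le_add1)
  ultimately show ?thesis using wi by blast
qed


lemma app1_inj: "1 \<notin> set A \<Longrightarrow> 1 \<notin> set A' \<Longrightarrow> A @ (1::nat) # R = A' @ 1 # R' \<Longrightarrow> A = A' \<and> R = R'"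
proof (induction A arbitrary: A')
  case Nil thus ?case by (cases A') auto
next
  case (Cons a A) thus ?case by (cases A') auto
qed

lemma ins_inj:
  assumes "0 \<notin> set v" "0 \<notin> set v'" "p \<le> length v" "p' \<le> length v'" "ins p v = ins p' v'"
  shows "p = p' \<and> v = v'"
proof -
  have n1: "1 \<notin> set (take p (map Suc v))" "1 \<notin> set (take p' (map Suc v'))"
    using assms(1,2) by (auto dest: in_set_takeD)
  from app1_inj[OF n1] assms(5) have e: "take p (map Suc v) = take p' (map Suc v')"
    "1 # drop p (map Suc v) = 1 # drop p' (map Suc v')" unfolding ins_def by auto
  hence pp: "p = p'" using assms(3,4) by (metis length_map length_take min.absorb2)
  hence "map Suc v = map Suc v'" using e by (metis append_take_drop_id list.inject)
  thus ?thesis using pp by (simp add: inj_map_eq_map)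
qed

lemma last_take: "0 < p \<Longrightarrow> p \<le> length u \<Longrightarrow> last (take p u) = u ! (p - 1)"
proof -
  assume a: "0 < p" "p \<le> length u"
  hence "take p u \<noteq> []" by auto
  hence "last (take p u) = take p u ! (length (take p u) - 1)" by (simp add: last_conv_nth)
  also have "\<dots> = u ! (p - 1)" using a by (simp add: min_def)
  finally show ?thesis .
qed

lemma asc_ins:
  assumes "0 \<notin> set v" "p \<le> length v"
  shows "asc (ins p v) = asc v + (if p = length v \<or> (0 < p \<and> p < length v \<and> v ! (p - 1) < v ! p) then 0 else 1)"
proof -
  let ?u = "map Suc v"
  let ?A = "take p ?u" and ?B = "drop p ?u"
  have uge: "x \<in> set ?u \<Longrightarrow> 2 \<le> x" for x using assms(1) by (cases x) (auto simp: Suc_le_eq intro: gr0I)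
  have a1: "asc (?A @ 1 # 1 # ?B) = asc ?A + asc (1 # 1 # ?B)"
  proof (cases "?A = []")
    case True show ?thesis unfolding True by simp
  next
    case False
    hence "last ?A \<in> set ?u" by (meson in_set_takeD last_in_set)
    hence "\<not> last ?A < 1" using uge by fastforce
    thus ?thesis using asc_append[of ?A "1#1#?B"] False by simp
  qed
  have a2: "asc (1 # 1 # ?B) = asc ?B + (if ?B \<noteq> [] then 1 else 0)"
  proof (cases ?B)
    case Nil thus ?thesis by simp
  next
    case (Cons b B')
    hence "b \<in> set ?u" by (metis in_set_dropD list.set_intros(1))
    hence "1 < b" using uge by fastforce
    thus ?thesis using Cons by simp
  qed
  have a3: "asc ?u = asc ?A + asc ?B + (if ?A \<noteq> [] \<and> ?B \<noteq> [] \<and> last ?A < hd ?B then 1 else 0)"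
    using asc_append[of ?A ?B] by simp
  have a4: "?A \<noteq> [] \<and> ?B \<noteq> [] \<and> last ?A < hd ?B \<longleftrightarrow> 0 < p \<and> p < length v \<and> v ! (p - 1) < v ! p"
  proof
    assume h: "?A \<noteq> [] \<and> ?B \<noteq> [] \<and> last ?A < hd ?B"
    hence "0 < p" "p < length v" by auto
    moreover have "last ?A = Suc (v ! (p - 1))" "hd ?B = Suc (v ! p)" using calculation
      by (auto simp: last_take hd_drop_conv_nth)
    ultimately show "0 < p \<and> p < length v \<and> v ! (p - 1) < v ! p" using h by simp
  next
    assume h: "0 < p \<and> p < length v \<and> v ! (p - 1) < v ! p"
    moreover have "last ?A = Suc (v ! (p - 1))" "hd ?B = Suc (v ! p)" using h
      by (auto simp: last_take hd_drop_conv_nth)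
    ultimately show "?A \<noteq> [] \<and> ?B \<noteq> [] \<and> last ?A < hd ?B" by auto
  qed
  have "?B \<noteq> [] \<longleftrightarrow> p < length v" by auto
  thus ?thesis using a1 a2 a3 a4 assms(2) asc_map_Suc[of v] unfolding ins_def by auto
qed



lemma sum_if_const: "finite X \<Longrightarrow> (\<Sum>x\<in>X. if P x then (c::nat) else 0) = c * card {x\<in>X. P x}"
  by (simp add: sum.inter_filter[symmetric])

lemma count_lemma:
  fixes g :: "'a \<times> 'b \<Rightarrow> 'c" and st :: "'c \<Rightarrow> nat" and st0 :: "'a \<Rightarrow> nat"
  assumes fX: "finite X" and fQ: "finite Q"
    and inj: "inj_on g (X \<times> Q)" and Y: "Y = g ` (X \<times> Q)"
    and stg: "\<And>x q. x\<in>X \<Longrightarrow> q\<in>Q \<Longrightarrow> st (g (x,q)) = st0 x + (if Z x q then 0 else 1)"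
    and cZ: "\<And>x. x\<in>X \<Longrightarrow> card {q\<in>Q. Z x q} = f (st0 x)"
  shows "card {y\<in>Y. st y = k} = f k * card {x\<in>X. st0 x = k}
           + (if k = 0 then 0 else (card Q - f (k-1)) * card {x\<in>X. st0 x = k - 1})"
proof -
  have "{y\<in>Y. st y = k} = g ` {z \<in> X \<times> Q. st (g z) = k}" using Y by auto
  hence "card {y\<in>Y. st y = k} = card {z \<in> X \<times> Q. st (g z) = k}"
    by (simp add: card_image inj_on_subset[OF inj])
  also have "{z \<in> X \<times> Q. st (g z) = k} = Sigma X (\<lambda>x. {q\<in>Q. st0 x + (if Z x q then 0 else 1) = k})"
    using stg by auto
  also have "card \<dots> = (\<Sum>x\<in>X. card {q\<in>Q. st0 x + (if Z x q then 0 else 1) = k})"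
    using fX fQ by simp
  also have "\<dots> = (\<Sum>x\<in>X. (if st0 x = k then f k else 0) + (if k \<noteq> 0 \<and> st0 x = k - 1 then card Q - f (k-1) else 0))"
  proof (rule sum.cong[OF refl])
    fix x assume x: "x \<in> X"
    show "card {q\<in>Q. st0 x + (if Z x q then 0 else 1) = k} = (if st0 x = k then f k else 0) + (if k \<noteq> 0 \<and> st0 x = k - 1 then card Q - f (k-1) else 0)"
    proof (cases "st0 x = k")
      case True
      hence "{q\<in>Q. st0 x + (if Z x q then 0 else 1) = k} = {q\<in>Q. Z x q}" by auto
      thus ?thesis using True cZ[OF x] by auto
    next
      case F: False
      show ?thesis
      proof (cases "k \<noteq> 0 \<and> st0 x = k - 1")
        case True
        hence "{q\<in>Q. st0 x + (if Z x q then 0 else 1) = k} = Q - {q\<in>Q. Z x q}" by auto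
        moreover have "card (Q - {q\<in>Q. Z x q}) = card Q - card {q\<in>Q. Z x q}"
          using fQ by (intro card_Diff_subset) auto
        ultimately show ?thesis using True F cZ[OF x] by auto
      next
        case False
        hence e: "{q\<in>Q. st0 x + (if Z x q then 0 else 1) = k} = {}" using F by auto
        show ?thesis unfolding e using F False by auto
      qed
    qed
  qed
  also have "\<dots> = f k * card {x\<in>X. st0 x = k}
           + (if k = 0 then 0 else (card Q - f (k-1)) * card {x\<in>X. st0 x = k - 1})"
    by (simp add: sum.distrib sum_if_const[OF fX])
  finally show ?thesis .
qed


lemma finite_stirling: "finite {v. stirling_perm n v}"
  by (rule finite_subset[OF _ finite_lists_length_eq[OF finite_atLeastAtMost, of 1 n "2*n"]])
     (auto simp: stirling_perm_def)

lemma card_Z: 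
  assumes "stirling_perm n v"
  shows "card {p\<in>{..2*n}. p = length v \<or> (0 < p \<and> p < length v \<and> v ! (p - 1) < v ! p)} = ascents v + 1"
proof -
  have lv: "length v = 2*n" using assms by (simp add: stirling_perm_def)
  have "{p\<in>{..2*n}. p = length v \<or> (0 < p \<and> p < length v \<and> v ! (p - 1) < v ! p)}
      = insert (length v) (Suc ` {i. Suc i < length v \<and> v ! i < v ! Suc i})"
    using lv by (auto simp: image_iff) (metis Suc_pred)
  moreover have "length v \<notin> Suc ` {i. Suc i < length v \<and> v ! i < v ! Suc i}" by auto
  moreover have "finite {i. Suc i < length v \<and> v ! i < v ! Suc i}" by (rule finite_subset[of _ "{..<length v}"]) auto
  ultimately show ?thesis by (simp add: card_image ascents_def)
qed

lemma eul_rec: "eulerian2 (Suc n) k = (k+1) * eulerian2 n k + (if k = 0 then 0 else (2*n+1-k) * eulerian2 n (k-1))"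
proof -
  let ?X = "{v. stirling_perm n v}" and ?Q = "{..2*n}"
  let ?Z = "\<lambda>v p. p = length v \<or> (0 < p \<and> p < length v \<and> v ! (p - 1) < v ! p)"
  have z: "stirling_perm n v \<Longrightarrow> 0 \<notin> set v" for v by (auto simp: stirling_perm_def)
  have l: "stirling_perm n v \<Longrightarrow> length v = 2*n" for v by (auto simp: stirling_perm_def)
  have inj: "inj_on (\<lambda>(v,p). ins p v) (?X \<times> ?Q)"
  proof (rule inj_onI)
    fix a b assume a: "a \<in> ?X \<times> ?Q" and b: "b \<in> ?X \<times> ?Q" and e: "(\<lambda>(v,p). ins p v) a = (\<lambda>(v,p). ins p v) b"
    obtain v p where vp: "a = (v,p)" by fastforce
    obtain v' p' where vp': "b = (v',p')" by fastforce
    have "p = p' \<and> v = v'" using a b e unfolding vp vp' by (intro ins_inj[OF z z]) (auto simp: l)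
    thus "a = b" using vp vp' by simp
  qed
  have Y: "{w. stirling_perm (Suc n) w} = (\<lambda>(v,p). ins p v) ` (?X \<times> ?Q)"
  proof
    show "{w. stirling_perm (Suc n) w} \<subseteq> (\<lambda>(v,p). ins p v) ` (?X \<times> ?Q)"
      using stirling_dec l by (fastforce simp: image_iff)
    show "(\<lambda>(v,p). ins p v) ` (?X \<times> ?Q) \<subseteq> {w. stirling_perm (Suc n) w}"
      using stirling_ins l by auto
  qed
  have stg: "ascents ((\<lambda>(v,p). ins p v) (v,p)) = ascents v + (if ?Z v p then 0 else 1)"
    if "v \<in> ?X" "p \<in> ?Q" for v p
    using asc_ins[OF z[of v], of p] that l[of v] by (simp add: ascents_asc)
  have "card {y\<in>{w. stirling_perm (Suc n) w}. ascents y = k} = (k+1) * card {x\<in>?X. ascents x = k}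
           + (if k = 0 then 0 else (card ?Q - ((k-1)+1)) * card {x\<in>?X. ascents x = k - 1})"
    apply (rule count_lemma[where Z = ?Z and f = "\<lambda>j. j+1"])
         apply (rule finite_stirling)
        apply simp
       apply (rule inj)
      apply (rule Y)
     apply (erule (1) stg)
    using card_Z by simp
  thus ?thesis unfolding eulerian2_def by auto
qed



lemma cd_chord:
  assumes "chord_diagram n C" "c \<in> C"
  shows "\<exists>x y. x < y \<and> c = {x,y} \<and> x \<in> {1..2*n} \<and> y \<in> {1..2*n}"
proof -
  have "card c = 2" "c \<subseteq> {1..2*n}" using assms unfolding chord_diagram_def partition_on_def by auto
  then obtain x y where xy: "c = {x,y}" "x \<noteq> y" by (meson card_2_iff)
  have r: "x \<in> {1..2*n}" "y \<in> {1..2*n}" using xy \<open>c \<subseteq> {1..2*n}\<close> by auto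
  show ?thesis
  proof (cases "x < y")
    case True thus ?thesis using xy r by blast
  next
    case False
    hence "y < x" using xy by simp
    moreover have "c = {y,x}" using xy by auto
    ultimately show ?thesis using r by blast
  qed
qed

lemma cd_unique:
  assumes "chord_diagram n C" "c \<in> C" "c' \<in> C" "x \<in> c" "x \<in> c'"
  shows "c = c'"
  using assms unfolding chord_diagram_def partition_on_def disjoint_def by blast

lemma cd_cover:
  assumes "chord_diagram n C" "x \<in> {1..2*n}"
  shows "\<exists>c\<in>C. x \<in> c"
  using assms unfolding chord_diagram_def partition_on_def by blast

lemma cd_chord_fin: "chord_diagram n C \<Longrightarrow> c \<in> C \<Longrightarrow> finite c \<and> c \<noteq> {}"
  using cd_chord by blast

lemma start_cd: "chord_diagram n C \<Longrightarrow> is_startpoint C i \<longleftrightarrow> (\<exists>j. i < j \<and> {i,j} \<in> C)"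
  unfolding is_startpoint_def
proof
  assume cd: "chord_diagram n C" and "\<exists>c\<in>C. i \<in> c \<and> i = Min c"
  then obtain c where c: "c \<in> C" "i \<in> c" "i = Min c" by blast
  then obtain x y where "x < y" "c = {x,y}" using cd_chord[OF cd] by blast
  thus "\<exists>j. i < j \<and> {i,j} \<in> C" using c by auto
next
  assume "\<exists>j. i < j \<and> {i,j} \<in> C"
  then obtain j where "i < j" "{i,j} \<in> C" by blast
  thus "\<exists>c\<in>C. i \<in> c \<and> i = Min c" by (intro bexI[of _ "{i,j}"]) auto
qed

lemma end_cd: "chord_diagram n C \<Longrightarrow> is_endpoint C i \<longleftrightarrow> (\<exists>j. j < i \<and> {j,i} \<in> C)"
  unfolding is_endpoint_def
proof
  assume cd: "chord_diagram n C" and "\<exists>c\<in>C. i \<in> c \<and> i = Max c"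
  then obtain c where c: "c \<in> C" "i \<in> c" "i = Max c" by blast
  then obtain x y where "x < y" "c = {x,y}" using cd_chord[OF cd] by blast
  thus "\<exists>j. j < i \<and> {j,i} \<in> C" using c by auto
next
  assume "\<exists>j. j < i \<and> {j,i} \<in> C"
  then obtain j where "j < i" "{j,i} \<in> C" by blast
  thus "\<exists>c\<in>C. i \<in> c \<and> i = Max c" by (intro bexI[of _ "{j,i}"]) auto
qed

lemma start_range: "chord_diagram n C \<Longrightarrow> is_startpoint C x \<Longrightarrow> 1 \<le> x \<and> x < 2*n"
proof -
  assume cd: "chord_diagram n C" "is_startpoint C x"
  then obtain j where j: "x < j" "{x,j} \<in> C" using start_cd by blast
  then obtain a b where "a < b" "{x,j} = {a,b}" "a \<in> {1..2*n}" "b \<in> {1..2*n}" using cd_chord[OF cd(1)] by blast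
  thus ?thesis using j by (auto simp: doubleton_eq_iff)
qed

lemma end_range: "chord_diagram n C \<Longrightarrow> is_endpoint C x \<Longrightarrow> 1 < x \<and> x \<le> 2*n"
proof -
  assume cd: "chord_diagram n C" "is_endpoint C x"
  then obtain j where j: "j < x" "{j,x} \<in> C" using end_cd by blast
  then obtain a b where "a < b" "{j,x} = {a,b}" "a \<in> {1..2*n}" "b \<in> {1..2*n}" using cd_chord[OF cd(1)] by blast
  thus ?thesis using j by (auto simp: doubleton_eq_iff)
qed

lemma start_or_end: "chord_diagram n C \<Longrightarrow> x \<in> {1..2*n} \<Longrightarrow> is_startpoint C x \<or> is_endpoint C x"
proof -
  assume cd: "chord_diagram n C" "x \<in> {1..2*n}"
  then obtain c where c: "c \<in> C" "x \<in> c" using cd_cover by blast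
  then obtain a b where "a < b" "c = {a,b}" using cd_chord[OF cd(1)] by blast
  thus ?thesis using c cd(1) by (auto simp: start_cd end_cd)
qed

lemma not_start_and_end: "chord_diagram n C \<Longrightarrow> is_startpoint C x \<Longrightarrow> is_endpoint C x \<Longrightarrow> False"
proof -
  assume cd: "chord_diagram n C" "is_startpoint C x" "is_endpoint C x"
  then obtain j where j: "x < j" "{x,j} \<in> C" using start_cd by blast
  obtain i where i: "i < x" "{i,x} \<in> C" using cd end_cd by blast
  have "{x,j} = {i,x}" using cd_unique[OF cd(1) j(2) i(2), of x] by simp
  thus False using i j by (auto simp: doubleton_eq_iff)
qed

lemma card_cd: "chord_diagram n C \<Longrightarrow> card C = n"
proof -
  assume cd: "chord_diagram n C"
  have p: "partition_on {1..2*n} C" and c2: "\<forall>c\<in>C. card c = 2" using cd by (auto simp: chord_diagram_def)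
  have "card (\<Union>C) = sum card C"
    using p cd_chord_fin[OF cd] by (intro card_Union_disjoint) (auto simp: partition_on_def disjoint_def)
  also have "\<dots> = 2 * card C" using c2 by simp
  finally show ?thesis using p by (simp add: partition_on_def)
qed

lemma card_starts: "chord_diagram n C \<Longrightarrow> card {x. is_startpoint C x} = n"
proof -
  assume cd: "chord_diagram n C"
  have "{x. is_startpoint C x} = Min ` C" unfolding is_startpoint_def
  proof (intro set_eqI iffI)
    fix x assume "x \<in> {x. \<exists>c\<in>C. x \<in> c \<and> x = Min c}"
    thus "x \<in> Min ` C" by auto
  next
    fix x assume "x \<in> Min ` C"
    then obtain c where "c \<in> C" "x = Min c" by auto
    moreover hence "x \<in> c" using cd_chord_fin[OF cd] Min_in by blast
    ultimately show "x \<in> {x. \<exists>c\<in>C. x \<in> c \<and> x = Min c}" by blast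
  qed
  moreover have "inj_on Min C"
  proof (rule inj_onI)
    fix c c' assume "c \<in> C" "c' \<in> C" "Min c = Min c'"
    moreover have "Min c \<in> c" "Min c' \<in> c'" using cd_chord_fin[OF cd] calculation Min_in by blast+
    ultimately show "c = c'" using cd_unique[OF cd, of c c' "Min c"] by simp
  qed
  ultimately show ?thesis using card_cd[OF cd] by (simp add: card_image)
qed



definition ush :: "nat \<Rightarrow> nat \<Rightarrow> nat" where "ush a x = (if x < a then x else Suc x)"
definition sh :: "nat \<Rightarrow> nat \<Rightarrow> nat" where "sh a x = (if x < a then x else x - 1)"
definition cins :: "nat \<Rightarrow> nat \<Rightarrow> nat set set \<Rightarrow> nat set set" where
  "cins n a D = insert {a, 2*n+2} ((`) (ush a) ` D)"

lemma ush_inj: "ush a x = ush a y \<longleftrightarrow> x = y" by (auto simp: ush_def)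
lemma inj_ush: "inj (ush a)" by (auto simp: inj_def ush_inj)
lemma ush_neq: "ush a x \<noteq> a" by (auto simp: ush_def)
lemma ush_Suc: "Suc (ush a x) = ush a y \<longleftrightarrow> y = Suc x \<and> Suc x \<noteq> a" by (auto simp: ush_def)
lemma ush_Suc_a: "ush a x = Suc a \<longleftrightarrow> x = a" by (auto simp: ush_def)
lemma ush_le: "ush a x \<le> Suc x" by (auto simp: ush_def)
lemma strict_mono_ush: "strict_mono (ush a)" by (auto simp: strict_mono_def ush_def)
lemma sh_ush: "sh a (ush a x) = x" by (auto simp: ush_def sh_def)
lemma ush_sh: "x \<noteq> a \<Longrightarrow> ush a (sh a x) = x" by (auto simp: ush_def sh_def)
lemma inj_on_sh: "inj_on (sh a) (- {a})" 
  by (rule inj_onI) (metis ComplD insertCI ush_sh)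

lemma ush_image: "1 \<le> a \<Longrightarrow> a \<le> 2*n+1 \<Longrightarrow> ush a ` {1..2*n} = {1..2*n+2} - {a, 2*n+2}"
proof (intro set_eqI iffI)
  fix x assume "1 \<le> a" "a \<le> 2*n+1" "x \<in> ush a ` {1..2*n}"
  thus "x \<in> {1..2*n+2} - {a, 2*n+2}" by (auto simp: ush_def)
next
  fix x assume a: "1 \<le> a" "a \<le> 2*n+1" and x: "x \<in> {1..2*n+2} - {a, 2*n+2}"
  show "x \<in> ush a ` {1..2*n}"
  proof (cases "x < a")
    case True thus ?thesis using a x by (intro image_eqI[of _ _ x]) (auto simp: ush_def)
  next
    case False thus ?thesis using a x by (intro image_eqI[of _ _ "x - 1"]) (auto simp: ush_def)
  qed
qed

lemma sh_image: "1 \<le> a \<Longrightarrow> a \<le> 2*n+1 \<Longrightarrow> sh a ` ({1..2*n+2} - {a, 2*n+2}) = {1..2*n}"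
proof -
  assume a: "1 \<le> a" "a \<le> 2*n+1"
  have "sh a ` ({1..2*n+2} - {a, 2*n+2}) = sh a ` ush a ` {1..2*n}" using ush_image[OF a] by simp
  also have "\<dots> = {1..2*n}" by (simp add: image_image sh_ush)
  finally show ?thesis .
qed

lemma start_image:
  assumes "strict_mono f" "\<forall>c\<in>D. finite c \<and> c \<noteq> {}"
  shows "is_startpoint ((`) f ` D) i \<longleftrightarrow> (\<exists>x. i = f x \<and> is_startpoint D x)"
proof -
  have m: "c \<in> D \<Longrightarrow> Min (f ` c) = f (Min c)" for c
    using mono_Min_commute[of f c] assms strict_mono_mono by fastforce
  have inj: "f x = f y \<longleftrightarrow> x = y" for x y using assms(1) strict_mono_eq by blast
  show ?thesis unfolding is_startpoint_def
  proof
    assume "\<exists>c'\<in>(`) f ` D. i \<in> c' \<and> i = Min c'"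
    then obtain c where c: "c \<in> D" "i = f (Min c)" using m by auto
    thus "\<exists>x. i = f x \<and> (\<exists>c\<in>D. x \<in> c \<and> x = Min c)" using assms(2) Min_in by blast
  next
    assume "\<exists>x. i = f x \<and> (\<exists>c\<in>D. x \<in> c \<and> x = Min c)"
    then obtain x c where "i = f x" "c \<in> D" "x \<in> c" "x = Min c" by blast
    thus "\<exists>c'\<in>(`) f ` D. i \<in> c' \<and> i = Min c'" using m by (intro bexI[of _ "f ` c"]) auto
  qed
qed

lemma end_image:
  assumes "strict_mono f" "\<forall>c\<in>D. finite c \<and> c \<noteq> {}"
  shows "is_endpoint ((`) f ` D) i \<longleftrightarrow> (\<exists>x. i = f x \<and> is_endpoint D x)"
proof -
  have m: "c \<in> D \<Longrightarrow> Max (f ` c) = f (Max c)" for c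
    using mono_Max_commute[of f c] assms strict_mono_mono by fastforce
  show ?thesis unfolding is_endpoint_def
  proof
    assume "\<exists>c'\<in>(`) f ` D. i \<in> c' \<and> i = Max c'"
    then obtain c where c: "c \<in> D" "i = f (Max c)" using m by auto
    thus "\<exists>x. i = f x \<and> (\<exists>c\<in>D. x \<in> c \<and> x = Max c)" using assms(2) Max_in by blast
  next
    assume "\<exists>x. i = f x \<and> (\<exists>c\<in>D. x \<in> c \<and> x = Max c)"
    then obtain x c where "i = f x" "c \<in> D" "x \<in> c" "x = Max c" by blast
    thus "\<exists>c'\<in>(`) f ` D. i \<in> c' \<and> i = Max c'" using m by (intro bexI[of _ "f ` c"]) auto
  qed
qed

lemma start_insert: "is_startpoint (insert c D) i \<longleftrightarrow> (i \<in> c \<and> i = Min c) \<or> is_startpoint D i"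
  by (auto simp: is_startpoint_def)
lemma end_insert: "is_endpoint (insert c D) i \<longleftrightarrow> (i \<in> c \<and> i = Max c) \<or> is_endpoint D i"
  by (auto simp: is_endpoint_def)

lemma start_cins:
  assumes "chord_diagram n D" "a \<le> 2*n+1"
  shows "is_startpoint (cins n a D) i \<longleftrightarrow> i = a \<or> (\<exists>x. i = ush a x \<and> is_startpoint D x)"
  unfolding cins_def start_insert
  using assms(2) by (auto simp: start_image[OF strict_mono_ush] cd_chord_fin[OF assms(1)])

lemma end_cins:
  assumes "chord_diagram n D" "a \<le> 2*n+1"
  shows "is_endpoint (cins n a D) i \<longleftrightarrow> i = 2*n+2 \<or> (\<exists>x. i = ush a x \<and> is_endpoint D x)"
  unfolding cins_def end_insert
  using assms(2) by (auto simp: end_image[OF strict_mono_ush] cd_chord_fin[OF assms(1)])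


lemma LR_set_cins:
  assumes cd: "chord_diagram n D" and a: "1 \<le> a" "a \<le> 2*n+1"
  shows "{i. is_startpoint (cins n a D) i \<and> is_endpoint (cins n a D) (i+1)}
     = ush a ` {x. (is_startpoint D x \<and> is_endpoint D (x+1)) \<and> Suc x \<noteq> a}
       \<union> (if a = 2*n+1 \<or> is_endpoint D a then {a} else {})" (is "?L = ?R")
proof (intro set_eqI iffI)
  fix i assume "i \<in> ?L"
  hence s: "i = a \<or> (\<exists>x. i = ush a x \<and> is_startpoint D x)"
    and e: "Suc i = 2*n+2 \<or> (\<exists>y. Suc i = ush a y \<and> is_endpoint D y)"
    using start_cins[OF cd a(2)] end_cins[OF cd a(2)] by auto
  show "i \<in> ?R"
  proof (cases "i = a")
    case True
    have "a = 2*n+1 \<or> is_endpoint D a"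
    proof (cases "Suc a = 2*n+2")
      case True thus ?thesis by simp
    next
      case False
      then obtain y where "Suc a = ush a y" "is_endpoint D y" using e \<open>i = a\<close> by auto
      hence "y = a" using ush_Suc_a by metis
      thus ?thesis using \<open>is_endpoint D y\<close> by simp
    qed
    thus ?thesis using True by auto
  next
    case False
    then obtain x where x: "i = ush a x" "is_startpoint D x" using s by blast
    have "x < 2*n" using start_range[OF cd x(2)] by simp
    hence "Suc i \<noteq> 2*n+2" using ush_le[of a x] x(1) by simp
    then obtain y where "Suc (ush a x) = ush a y" "is_endpoint D y" using e x by auto
    hence "y = Suc x" "Suc x \<noteq> a" "is_endpoint D (Suc x)" using ush_Suc by auto
    thus ?thesis using x by auto
  qed
next
  fix i assume i: "i \<in> ?R"
  show "i \<in> ?L"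
  proof (cases "i \<in> ush a ` {x. (is_startpoint D x \<and> is_endpoint D (x+1)) \<and> Suc x \<noteq> a}")
    case True
    then obtain x where x: "i = ush a x" "is_startpoint D x" "is_endpoint D (Suc x)" "Suc x \<noteq> a" by auto
    have "Suc (ush a x) = ush a (Suc x)" using x(4) ush_Suc by blast
    thus ?thesis using x start_cins[OF cd a(2)] end_cins[OF cd a(2)] by auto
  next
    case False
    hence ia: "i = a" "a = 2*n+1 \<or> is_endpoint D a" using i by (auto split: if_splits)
    have "Suc a = ush a a" by (simp add: ush_def)
    thus ?thesis using ia start_cins[OF cd a(2)] end_cins[OF cd a(2)] by auto
  qed
qed

lemma LR_cins:
  assumes cd: "chord_diagram n D" and a: "1 \<le> a" "a \<le> 2*n+1"
  shows "LR_pairs (cins n a D) = LR_pairs D +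
    (if (\<exists>x. (is_startpoint D x \<and> is_endpoint D (x+1)) \<and> Suc x = a) \<or> \<not> (a = 2*n+1 \<or> is_endpoint D a) then 0 else 1)"
proof -
  let ?LD = "{x. is_startpoint D x \<and> is_endpoint D (x+1)}"
  have fin: "finite ?LD" by (rule finite_subset[of _ "{..2*n}"]) (auto dest: start_range[OF cd])
  have dis: "a \<notin> ush a ` X" for X by (metis image_iff ush_neq)
  have "LR_pairs (cins n a D) = card (ush a ` {x. (is_startpoint D x \<and> is_endpoint D (x+1)) \<and> Suc x \<noteq> a})
       + card (if a = 2*n+1 \<or> is_endpoint D a then {a} else {})"
    unfolding LR_pairs_def LR_set_cins[OF assms]
  proof (rule card_Un_disjoint)
    have "finite {x. (is_startpoint D x \<and> is_endpoint D (x+1)) \<and> Suc x \<noteq> a}"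
      by (rule finite_subset[OF _ fin]) auto
    thus "finite (ush a ` {x. (is_startpoint D x \<and> is_endpoint D (x+1)) \<and> Suc x \<noteq> a})" by simp
  qed (use dis in auto)
  also have "card (ush a ` {x. (is_startpoint D x \<and> is_endpoint D (x+1)) \<and> Suc x \<noteq> a})
     = card {x. (is_startpoint D x \<and> is_endpoint D (x+1)) \<and> Suc x \<noteq> a}"
    by (rule card_image) (meson inj_ush inj_on_subset subset_UNIV)
  finally have eq: "LR_pairs (cins n a D) = card {x. (is_startpoint D x \<and> is_endpoint D (x+1)) \<and> Suc x \<noteq> a}
       + (if a = 2*n+1 \<or> is_endpoint D a then 1 else 0)" by simp
  show ?thesis
  proof (cases "\<exists>x. (is_startpoint D x \<and> is_endpoint D (x+1)) \<and> Suc x = a")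
    case True
    then obtain x where x: "is_startpoint D x" "is_endpoint D (x+1)" "Suc x = a" by blast
    have "{x. (is_startpoint D x \<and> is_endpoint D (x+1)) \<and> Suc x \<noteq> a} = ?LD - {x}" using x by auto
    moreover have "x \<in> ?LD" using x by auto
    ultimately have "card {x. (is_startpoint D x \<and> is_endpoint D (x+1)) \<and> Suc x \<noteq> a} = card ?LD - 1"
      using fin by simp
    moreover have "card ?LD \<ge> 1" using fin \<open>x \<in> ?LD\<close> by (metis One_nat_def Suc_leI card_gt_0_iff empty_iff)
    moreover have "is_endpoint D a" using x by simp
    ultimately show ?thesis using eq True unfolding LR_pairs_def by simp
  next
    case False
    hence "{x. (is_startpoint D x \<and> is_endpoint D (x+1)) \<and> Suc x \<noteq> a} = ?LD" by auto
    thus ?thesis using eq False unfolding LR_pairs_def by simp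
  qed
qed

lemma card_Z_cd:
  assumes cd: "chord_diagram n D"
  shows "card {a\<in>{1..2*n+1}. (\<exists>x. (is_startpoint D x \<and> is_endpoint D (x+1)) \<and> Suc x = a) \<or> \<not> (a = 2*n+1 \<or> is_endpoint D a)}
    = n + LR_pairs D"
proof -
  let ?LD = "{x. is_startpoint D x \<and> is_endpoint D (x+1)}"
  let ?S = "{x. is_startpoint D x}"
  have fin: "finite ?LD" by (rule finite_subset[of _ "{..2*n}"]) (auto dest: start_range[OF cd])
  have finS: "finite ?S" by (rule finite_subset[of _ "{..2*n}"]) (auto dest: start_range[OF cd])
  have "{a\<in>{1..2*n+1}. (\<exists>x. (is_startpoint D x \<and> is_endpoint D (x+1)) \<and> Suc x = a) \<or> \<not> (a = 2*n+1 \<or> is_endpoint D a)}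
     = ?S \<union> Suc ` ?LD" (is "?A = _")
  proof (intro set_eqI iffI)
    fix a assume "a \<in> ?A"
    hence a: "1 \<le> a" "a \<le> 2*n+1" "(\<exists>x. (is_startpoint D x \<and> is_endpoint D (x+1)) \<and> Suc x = a) \<or> \<not> (a = 2*n+1 \<or> is_endpoint D a)" by auto
    show "a \<in> ?S \<union> Suc ` ?LD"
    proof (cases "\<exists>x. (is_startpoint D x \<and> is_endpoint D (x+1)) \<and> Suc x = a")
      case True thus ?thesis by auto
    next
      case False
      hence "a \<noteq> 2*n+1" "\<not> is_endpoint D a" using a by auto
      hence "is_startpoint D a" using start_or_end[OF cd, of a] a by auto
      thus ?thesis by auto
    qed
  next
    fix a assume "a \<in> ?S \<union> Suc ` ?LD"
    thus "a \<in> ?A"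
    proof
      assume "a \<in> ?S"
      thus "a \<in> ?A" using start_range[OF cd, of a] not_start_and_end[OF cd, of a] by auto
    next
      assume "a \<in> Suc ` ?LD"
      then obtain x where "a = Suc x" "is_startpoint D x" "is_endpoint D (Suc x)" by auto
      thus "a \<in> ?A" using end_range[OF cd, of "Suc x"] by auto
    qed
  qed
  moreover have "?S \<inter> Suc ` ?LD = {}" using not_start_and_end[OF cd] by auto
  ultimately have "card ?A = card ?S + card (Suc ` ?LD)" using fin finS by (simp add: card_Un_disjoint)
  also have "\<dots> = n + LR_pairs D" using card_starts[OF cd] by (simp add: card_image LR_pairs_def)
  finally show ?thesis .
qed



lemma ush_bound: "x \<le> 2*n \<Longrightarrow> ush a x \<le> 2*n+1" using ush_le[of a x] by simp

lemma cd_cins: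
  assumes cd: "chord_diagram n D" and a: "1 \<le> a" "a \<le> 2*n+1"
  shows "chord_diagram (Suc n) (cins n a D)"
proof -
  have pD: "partition_on {1..2*n} D" and c2: "\<forall>c\<in>D. card c = 2" using cd by (auto simp: chord_diagram_def)
  have p1: "partition_on (ush a ` {1..2*n}) ((`) (ush a) ` D - {{}})"
    by (rule partition_on_inj_image[OF pD]) (meson inj_ush inj_on_subset subset_UNIV)
  have ne: "(`) (ush a) ` D - {{}} = (`) (ush a) ` D" using cd_chord_fin[OF cd] by auto
  have U: "\<Union>((`) (ush a) ` D) = ush a ` {1..2*n}" using p1 ne by (simp add: partition_on_def)
  have n1: "a \<notin> ush a ` {1..2*n}" by (metis image_iff ush_neq)
  have n2: "2*n+2 \<notin> ush a ` {1..2*n}"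
  proof
    assume "2*n+2 \<in> ush a ` {1..2*n}"
    then obtain x where "x \<in> {1..2*n}" "2*n+2 = ush a x" by blast
    thus False using ush_bound[of x n a] by simp
  qed
  have dj: "disjnt {a, 2*n+2} (\<Union>((`) (ush a) ` D))" unfolding U disjnt_def
    using n1 n2 by blast
  have pp: "partition_on ({1..2*n+2} - {a,2*n+2}) ((`) (ush a) ` D)" using p1 ne ush_image[OF a] by simp
  have sub: "{a,2*n+2} \<subseteq> {1..2*n+2}" using a by auto
  have "partition_on {1..2*n+2} (insert {a, 2*n+2} ((`) (ush a) ` D))"
    using partition_on_insert[OF dj] pp sub by blast
  hence "partition_on {1..2*Suc n} (cins n a D)" unfolding cins_def by simp
  moreover have "\<forall>c\<in>cins n a D. card c = 2"
  proof
    fix c assume "c \<in> cins n a D"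
    hence "c = {a, 2*n+2} \<or> (\<exists>c'\<in>D. c = ush a ` c')" unfolding cins_def by blast
    thus "card c = 2"
    proof
      assume "c = {a, 2*n+2}" thus ?thesis using a by simp
    next
      assume "\<exists>c'\<in>D. c = ush a ` c'"
      then obtain c' where "c' \<in> D" "c = ush a ` c'" by blast
      moreover have "inj_on (ush a) c'" by (meson inj_ush inj_on_subset subset_UNIV)
      ultimately show ?thesis using c2 by (simp add: card_image)
    qed
  qed
  ultimately show ?thesis by (simp add: chord_diagram_def)
qed

lemma cd_remove:
  assumes cd: "chord_diagram (Suc n) C"
  shows "\<exists>a D. 1 \<le> a \<and> a \<le> 2*n+1 \<and> chord_diagram n D \<and> C = cins n a D"
proof -
  have pC: "partition_on {1..2*n+2} C" and c2: "\<forall>c\<in>C. card c = 2" using cd by (auto simp: chord_diagram_def)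
  obtain c0 where c0: "c0 \<in> C" "2*n+2 \<in> c0" using cd_cover[OF cd, of "2*n+2"] by auto
  obtain x y where xy: "x < y" "c0 = {x,y}" "x \<in> {1..2*Suc n}" "y \<in> {1..2*Suc n}" using cd_chord[OF cd c0(1)] by blast
  have y: "y = 2*n+2" using xy c0(2) by auto
  define a where "a = x"
  have a: "1 \<le> a" "a \<le> 2*n+1" using xy y a_def by auto
  have c0a: "c0 = {a, 2*n+2}" using xy y a_def by simp
  let ?C' = "C - {c0}"
  have Cins: "C = insert c0 ?C'" using c0 by auto
  have dj: "disjnt c0 (\<Union>?C')" unfolding disjnt_def using cd_unique[OF cd] c0(1) by blast
  have pC': "partition_on ({1..2*n+2} - {a, 2*n+2}) ?C'"
    using partition_on_insert[OF dj] pC Cins c0a by (metis)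
  have na: "c \<in> ?C' \<Longrightarrow> a \<notin> c" for c using cd_unique[OF cd, of c c0 a] c0 c0a by auto
  have injs: "inj_on (sh a) ({1..2*n+2} - {a, 2*n+2})" by (rule inj_on_subset[OF inj_on_sh]) auto
  define D where "D = (`) (sh a) ` ?C'"
  have cardD: "\<forall>c\<in>D. card c = 2"
  proof
    fix c' assume "c' \<in> D"
    then obtain c where c: "c \<in> ?C'" "c' = sh a ` c" unfolding D_def by auto
    have "inj_on (sh a) c" using na[OF c(1)] by (intro inj_on_subset[OF inj_on_sh]) auto
    thus "card c' = 2" using c c2 by (simp add: card_image)
  qed
  have ne: "D - {{}} = D" using cardD by fastforce
  have pD: "partition_on {1..2*n} D"
    using partition_on_inj_image[OF pC' injs] sh_image[OF a] ne unfolding D_def by simp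
  have "(`) (ush a) ` D = ?C'"
  proof -
    have "(`) (ush a) ` D = (\<lambda>c. ush a ` sh a ` c) ` ?C'" unfolding D_def by (simp add: image_image)
    also have "\<dots> = (\<lambda>c. c) ` ?C'"
    proof (rule image_cong[OF refl])
      fix c assume "c \<in> ?C'"
      hence "\<forall>z\<in>c. z \<noteq> a" using na by blast
      thus "ush a ` sh a ` c = c" by (simp add: image_image ush_sh)
    qed
    finally show ?thesis by simp
  qed
  hence "C = cins n a D" unfolding cins_def using Cins c0a by simp
  moreover have "chord_diagram n D" using pD cardD by (simp add: chord_diagram_def)
  ultimately show ?thesis using a by blast
qed

lemma cins_inj:
  assumes cd: "chord_diagram n D" "chord_diagram n D'" and a: "a \<le> 2*n+1" "a' \<le> 2*n+1"
    and e: "cins n a D = cins n a' D'"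
  shows "a = a' \<and> D = D'"
proof -
  have noN: "chord_diagram n X \<Longrightarrow> b \<le> 2*n+1 \<Longrightarrow> c \<in> (`) (ush b) ` X \<Longrightarrow> 2*n+2 \<notin> c" for X b c
  proof
    assume h: "chord_diagram n X" "c \<in> (`) (ush b) ` X" "2*n+2 \<in> c"
    then obtain c' z where "c' \<in> X" "z \<in> c'" "2*n+2 = ush b z" by auto
    moreover have "z \<le> 2*n" using cd_chord[OF h(1) calculation(1)] calculation(2) by auto
    ultimately show False using ush_bound[of z n b] by simp
  qed
  have "{a, 2*n+2} \<in> cins n a' D'" using e unfolding cins_def by auto
  hence "{a, 2*n+2} = {a', 2*n+2}" unfolding cins_def using noN[OF cd(2) a(2)] by auto
  hence aa: "a = a'" using a by (auto simp: doubleton_eq_iff)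
  have r: "cins n b X - {{b, 2*n+2}} = (`) (ush b) ` X" if "chord_diagram n X" "b \<le> 2*n+1" for X b
    unfolding cins_def using noN[OF that] by auto
  have "(`) (ush a) ` D = (`) (ush a) ` D'" using r[OF cd(1) a(1)] r[OF cd(2) a(2)] e aa by simp
  moreover have "inj ((`) (ush a))" by (rule injI) (simp add: inj_image_eq_iff[OF inj_ush])
  ultimately have "D = D'" by (simp add: inj_image_eq_iff)
  thus ?thesis using aa by simp
qed

lemma finite_cd: "finite {D. chord_diagram n D}"
  by (rule finite_subset[OF _ finitely_many_partition_on[of "{1..2*n}"]]) (auto simp: chord_diagram_def)

definition CD :: "nat \<Rightarrow> nat \<Rightarrow> nat" where
  "CD n k = card {C. chord_diagram n C \<and> LR_pairs C = k}"

lemma CD_rec: "CD (Suc n) k = (n+k) * CD n k + (if k = 0 then 0 else (2*n+1 - (n + (k-1))) * CD n (k-1))"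
proof -
  let ?X = "{D. chord_diagram n D}" and ?Q = "{1..2*n+1}"
  let ?Z = "\<lambda>D a. (\<exists>x. (is_startpoint D x \<and> is_endpoint D (x+1)) \<and> Suc x = a) \<or> \<not> (a = 2*n+1 \<or> is_endpoint D a)"
  have inj: "inj_on (\<lambda>(D,a). cins n a D) (?X \<times> ?Q)"
  proof (rule inj_onI)
    fix p q assume p: "p \<in> ?X \<times> ?Q" and q: "q \<in> ?X \<times> ?Q" and e: "(\<lambda>(D,a). cins n a D) p = (\<lambda>(D,a). cins n a D) q"
    obtain D a where da: "p = (D,a)" by fastforce
    obtain D' a' where da': "q = (D',a')" by fastforce
    have "a = a' \<and> D = D'" using p q e unfolding da da' by (intro cins_inj[of n]) auto
    thus "p = q" using da da' by simp
  qed
  have Y: "{C. chord_diagram (Suc n) C} = (\<lambda>(D,a). cins n a D) ` (?X \<times> ?Q)"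
  proof
    show "{C. chord_diagram (Suc n) C} \<subseteq> (\<lambda>(D,a). cins n a D) ` (?X \<times> ?Q)"
      using cd_remove by (fastforce simp: image_iff)
    show "(\<lambda>(D,a). cins n a D) ` (?X \<times> ?Q) \<subseteq> {C. chord_diagram (Suc n) C}"
      using cd_cins by auto
  qed
  have stg: "LR_pairs ((\<lambda>(D,a). cins n a D) (D,a)) = LR_pairs D + (if ?Z D a then 0 else 1)"
    if "D \<in> ?X" "a \<in> ?Q" for D a
    using LR_cins[of n D a] that by simp
  have "card {y\<in>{C. chord_diagram (Suc n) C}. LR_pairs y = k} = (n+k) * card {x\<in>?X. LR_pairs x = k}
           + (if k = 0 then 0 else (card ?Q - (n + (k-1))) * card {x\<in>?X. LR_pairs x = k - 1})"
    apply (rule count_lemma[where Z = ?Z and f = "\<lambda>j. n+j"])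
         apply (rule finite_cd)
        apply simp
       apply (rule inj)
      apply (rule Y)
     apply (erule (1) stg)
    using card_Z_cd by simp
  thus ?thesis unfolding CD_def by simp
qed


lemma stirling0: "stirling_perm 0 w \<longleftrightarrow> w = []"
  by (auto simp: stirling_perm_def)

lemma eul0: "eulerian2 0 k = (if k = 0 then 1 else 0)"
proof -
  have "{w. stirling_perm 0 w \<and> ascents w = k} = (if k = 0 then {[]} else {})"
    by (auto simp: stirling0 ascents_def)
  thus ?thesis unfolding eulerian2_def by simp
qed

lemma eul_vanish: "0 < k \<Longrightarrow> n \<le> k \<Longrightarrow> eulerian2 n k = 0"
proof (induction n arbitrary: k)
  case 0 thus ?case by (simp add: eul0)
next
  case (Suc n)
  have a: "eulerian2 n k = 0" using Suc by simp
  have b: "(2*n+1-k) * eulerian2 n (k-1) = 0"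
  proof (cases "k - 1 = 0")
    case True thus ?thesis using Suc.prems by simp
  next
    case False thus ?thesis using Suc.IH[of "k-1"] Suc.prems by simp
  qed
  show ?case using a b Suc.prems by (simp add: eul_rec)
qed

lemma eul_top: "eulerian2 (Suc m) m = fact (Suc m)"
proof (induction m)
  case 0 thus ?case by (simp add: eul_rec eul0)
next
  case (Suc m)
  have "eulerian2 (Suc (Suc m)) (Suc m) = (Suc m + 1) * eulerian2 (Suc m) (Suc m) + (2 * Suc m + 1 - Suc m) * eulerian2 (Suc m) m"
    by (simp only: eul_rec) simp
  also have "eulerian2 (Suc m) (Suc m) = 0" by (rule eul_vanish) auto
  finally show ?case using Suc by (simp add: algebra_simps)
qed

lemma T_rec:
  assumes "2 \<le> n" "1 \<le> k" "k \<le> n"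
  shows "T n k = (n - k + 1) * T (n - 1) (k - 1) + (n - 1 + k) * T (n - 1) k"
proof -
  obtain m where n: "n = Suc m" and m: "1 \<le> m" using assms by (cases n) auto
  define j where "j = m + 1 - k"
  have Tn: "T n k = eulerian2 (Suc m) j" unfolding T_def j_def n using assms n by simp
  have T1: "T m (k - 1) = eulerian2 m j"
  proof (cases "k = 1")
    case True
    hence "j = m" using j_def by simp
    thus ?thesis using True m eul_vanish[of m m] by (simp add: T_def)
  next
    case False thus ?thesis using assms n unfolding T_def j_def by auto
  qed
  have T2: "(n - 1 + k) * T m k = (if j = 0 then 0 else (2*m+1-j) * eulerian2 m (j-1))"
  proof (cases "k = Suc m")
    case True thus ?thesis unfolding j_def T_def by simp
  next
    case False
    hence "k \<le> m" using assms n by simp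
    moreover hence "j \<noteq> 0" "j - 1 = m - k" "2*m+1-j = n - 1 + k" using j_def n by auto
    ultimately show ?thesis using assms unfolding T_def by simp
  qed
  have "T n k = (j+1) * eulerian2 m j + (if j = 0 then 0 else (2*m+1-j) * eulerian2 m (j-1))"
    using Tn eul_rec by simp
  also have "j + 1 = n - k + 1" using j_def n assms by simp
  finally show ?thesis using T1 T2 n by simp
qed

lemma cd0: "chord_diagram 0 C \<longleftrightarrow> C = {}"
  by (auto simp: chord_diagram_def partition_on_empty)

lemma CD0: "CD 0 k = (if k = 0 then 1 else 0)"
proof -
  have "LR_pairs {} = 0" by (simp add: LR_pairs_def is_startpoint_def)
  hence "{C. chord_diagram 0 C \<and> LR_pairs C = k} = (if k = 0 then {{}} else {})"
    by (auto simp: cd0)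
  thus ?thesis unfolding CD_def by simp
qed

lemma CD_T: "CD n k = (if n = 0 then (if k = 0 then 1 else 0) else T n k)"
proof (induction n arbitrary: k)
  case 0 thus ?case by (simp add: CD0)
next
  case (Suc n)
  show ?case
  proof (cases "n = 0")
    case True
    have e10: "eulerian2 1 0 = 1" using eul_rec[of 0 0] by (simp add: eul0)
    show ?thesis using True e10 by (simp add: CD_rec CD0 T_def)
  next
    case False
    have IH: "CD n j = T n j" for j using Suc.IH False by simp
    have T0: "T m 0 = 0" for m by (simp add: T_def)
    show ?thesis
    proof (cases "k = 0")
      case True thus ?thesis by (simp add: CD_rec IH T0)
    next
      case k0: False
      show ?thesis
      proof (cases "k \<le> Suc n")
        case True
        have "T (Suc n) k = (Suc n - k + 1) * T n (k - 1) + (n + k) * T n k"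
          using T_rec[of "Suc n" k] True k0 False by simp
        moreover have "2*n+1 - (n + (k-1)) = Suc n - k + 1" using True k0 by simp
        ultimately show ?thesis using k0 by (simp add: CD_rec IH algebra_simps)
      next
        case False
        thus ?thesis by (simp add: CD_rec IH T_def)
      qed
    qed
  qed
qed

theorem mainTheorem4:
  fixes n k :: nat
  assumes "1 \<le> n" and "1 \<le> k" and "k \<le> n"
  shows "(2 \<le> n \<longrightarrow> T n k = (n - k + 1) * T (n - 1) (k - 1) + (n - 1 + k) * T (n - 1) k)
         \<and> T n 1 = fact n
         \<and> T n k = card {C. chord_diagram n C \<and> LR_pairs C = k}"
proof (intro conjI impI)
  show "2 \<le> n \<Longrightarrow> T n k = (n - k + 1) * T (n - 1) (k - 1) + (n - 1 + k) * T (n - 1) k"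
    using T_rec assms by blast
  obtain m where n: "n = Suc m" using assms by (cases n) auto
  show "T n 1 = fact n" unfolding n T_def using eul_top by simp
  show "T n k = card {C. chord_diagram n C \<and> LR_pairs C = k}"
    using CD_T[of n k] assms unfolding CD_def by simp
qed

end
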